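(* Let $f:\mathbb R\to\mathbb R$ be monotonically increasing with $f(0)=0$. Let $\vec X^m\in\underline V^h_{\partial_0}$ satisfy assumption $(\mathfrak A)$, let $\Delta t_m>0$, and let $(\delta\vec X^{m+1},\kappa^{m+1})\in\underline V^h_\partial\times W^h_{\partial_0}$ satisfy, with $\vec X^{m+1}=\vec X^m+\delta\vec X^{m+1}$, $$\Big(\vec X^m\cdot\vec e_1\,\tfrac{\vec X^{m+1}-\vec X^m}{\Delta t_m},\chi\,\vec\nu^m|\vec X^m_\rho|\Big)^h=\Big(\vec X^m\cdot\vec e_1\,\pi^h[f(\kappa^{m+1})],\chi|\vec X^m_\rho|\Big)^h\quad\forall\chi\in W^h_{\partial_0},$$ $$\Big(\vec X^m\cdot\vec e_1\,\kappa^{m+1}\vec\nu^m,\vec\eta\,|\vec X^m_\rho|\Big)^h+\big(\vec\eta\cdot\vec e_1,|\vec X^{m+1}_\rho|\big)+\Big((\vec X^m\cdot\vec e_1)\vec X^{m+1}_\rho,\vec\eta_\rho|\vec X^m_\rho|^{-1}\Big)=B^m(\vec\eta)\quad\forall\vec\eta\in\underline V^h_\partial.$$ Then $E(\vec X^{m+1})+2\pi\Delta t_m\big(\vec X^m\cdot\vec e_1\,f(\kappa^{m+1}),\kappa^{m+1}|\vec X^m_\rho|\big)^h\le E(\vec X^m)$, and in particular $E(\vec X^{m+1})\le E(\vec X^m)$.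
   Context: Setup. $\vec e_1=(1,0)^T$, $\vec e_2=(0,1)^T$; "$\cdot$" is the Euclidean inner product; $[r]_+=\max\{r,0\}$, $[r]_-=-\max\{-r,0\}$. $I$ is either the periodic interval $\mathbb R/\mathbb Z$ (with $\partial I=\emptyset$) or $I=(0,1)$ (with $\partial I=\{0,1\}$). $\partial I=\partial_DI\cup\partial_0I\cup\partial_1I\cup\partial_2I$ is a given disjoint partition, and $\widehat\varrho^{(p)}\in\mathbb R$, $p\in\{0,1\}$, are given constants with $|\widehat\varrho^{(p)}|\le1$. Let $J\ge3$, $h=1/J$, $q_j=jh$ ($j=0,\dots,J$; $q_0=q_J$ identified in the periodic case). $V^h$ is the space of continuous functions on $\overline I$ (periodic if $I=\mathbb R/\mathbb Z$) that are affine on each $[q_{j-1},q_j]$, and $\pi^h$ is the nodal interpolation onto $V^h$; $\underline V^h=[V^h]^2$; $\underline V^h_{\partial_0}=\{\vec\eta\in\underline V^h:\vec\eta(\rho)\cdot\vec e_1=0\ \forall\rho\in\partial_0I\}$; $\underline V^h_\partial=\{\vec\eta\in\underline V^h_{\partial_0}:\vec\eta(\rho)\cdot\vec e_i=0\ \forall\rho\in\partial_iI,\ i=1,2;\ \vec\eta(\rho)=\vec0\ \forall\rho\in\partial_DI\}$; $W^h_{\partial_0}=\{\chi\in V^h:\chi(\rho)=0\ \forall\rho\in\partial_0I\}$. $(\cdot,\cdot)$ is the $L^2(I)$ inner product, and for piecewise continuous $f,g$ the mass-lumped product is $(f,g)^h=\tfrac h2\sum_{j=1}^J[(fg)(q_j^-)+(fg)(q_{j-1}^+)]$.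 $\vec\nu^m=-[\vec X^m_\rho]^\perp/|\vec X^m_\rho|$ with $(a,b)^\perp=(b,-a)$. Assumption $(\mathfrak A)$: $|\vec X^m_\rho|>0$ a.e. on $I$ and $\vec X^m(\rho)\cdot\vec e_1>0$ for all $\rho\in\overline I\setminus\partial_0I$. $B^m(\vec\eta)=-\sum_{p\in\partial_1I}\widehat\varrho^{(p)}(\vec X^m(p)\cdot\vec e_1)\vec\eta(p)\cdot\vec e_2-\sum_{p\in\partial_2I}\big(([\widehat\varrho^{(p)}]_+\vec X^{m+1}(p)+[\widehat\varrho^{(p)}]_-\vec X^m(p))\cdot\vec e_1\big)\vec\eta(p)\cdot\vec e_1$. The discrete energy of $\vec X\in\underline V^h$ is $E(\vec X)=2\pi(\vec X\cdot\vec e_1,|\vec X_\rho|)+2\pi\sum_{p\in\partial_1I}\widehat\varrho^{(p)}(\vec X(p)\cdot\vec e_1)(\vec X(p)\cdot\vec e_2)+\pi\sum_{p\in\partial_2I}\widehat\varrho^{(p)}(\vec X(p)\cdot\vec e_1)^2$. *)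

theory Defs
  imports "HOL-Analysis.Analysis"
begin

(* Finite element functions in V^h are represented by their nodal values
   X :: nat => 'a at the nodes q_0,...,q_J (indices > J are irrelevant).
   A piecewise continuous function on I is represented elementwise:
   F j rho is its (continuously extended) value on the closed element
   [q_{j-1}, q_j], j = 1..J. *)

definition node :: "nat \<Rightarrow> nat \<Rightarrow> real" where
  "node J j = real j / real J"

definition e1 :: "real \<times> real" where "e1 = (1, 0)"
definition e2 :: "real \<times> real" where "e2 = (0, 1)"

definition perp :: "real \<times> real \<Rightarrow> real \<times> real" where
  "perp v = (snd v, - fst v)"

definition posp :: "real \<Rightarrow> real" where "posp r = max r 0"
definition negp :: "real \<Rightarrow> real" where "negp r = - max (- r) 0"

definition bdry :: "bool \<Rightarrow> real set" where
  "bdry periodic = (if periodic then {} else {0, 1})"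

definition inVh :: "bool \<Rightarrow> nat \<Rightarrow> (nat \<Rightarrow> 'a) \<Rightarrow> bool" where
  "inVh periodic J X \<longleftrightarrow> (periodic \<longrightarrow> X J = X 0)"

definition bval :: "nat \<Rightarrow> (nat \<Rightarrow> 'a) \<Rightarrow> real \<Rightarrow> 'a" where
  "bval J X p = (if p = 0 then X 0 else X J)"

definition pl :: "nat \<Rightarrow> (nat \<Rightarrow> 'a::real_vector) \<Rightarrow> nat \<Rightarrow> real \<Rightarrow> 'a" where
  "pl J X j rho = X (j - 1) + ((rho - node J (j - 1)) * real J) *\<^sub>R (X j - X (j - 1))"

definition dpl :: "nat \<Rightarrow> (nat \<Rightarrow> 'a::real_vector) \<Rightarrow> nat \<Rightarrow> real \<Rightarrow> 'a" where
  "dpl J X j rho = real J *\<^sub>R (X j - X (j - 1))"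

definition nu :: "nat \<Rightarrow> (nat \<Rightarrow> real \<times> real) \<Rightarrow> nat \<Rightarrow> real \<Rightarrow> real \<times> real" where
  "nu J X j rho = - ((1 / norm (dpl J X j rho)) *\<^sub>R perp (dpl J X j rho))"

definition mlip :: "nat \<Rightarrow> (nat \<Rightarrow> real \<Rightarrow> 'a::real_inner) \<Rightarrow> (nat \<Rightarrow> real \<Rightarrow> 'a) \<Rightarrow> real" where
  "mlip J f g = (1 / real J) / 2 *
     (\<Sum>j = 1..J. f j (node J j) \<bullet> g j (node J j)
                 + f j (node J (j - 1)) \<bullet> g j (node J (j - 1)))"

definition l2ip :: "nat \<Rightarrow> (nat \<Rightarrow> real \<Rightarrow> 'a::real_inner) \<Rightarrow> (nat \<Rightarrow> real \<Rightarrow> 'a) \<Rightarrow> real" where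
  "l2ip J f g = (\<Sum>j = 1..J. integral {node J (j - 1) .. node J j} (\<lambda>rho. f j rho \<bullet> g j rho))"

definition Vh0 :: "bool \<Rightarrow> nat \<Rightarrow> real set \<Rightarrow> (nat \<Rightarrow> real \<times> real) \<Rightarrow> bool" where
  "Vh0 periodic J P0 eta \<longleftrightarrow> inVh periodic J eta \<and> (\<forall>p\<in>P0. bval J eta p \<bullet> e1 = 0)"

definition Vhb :: "bool \<Rightarrow> nat \<Rightarrow> real set \<Rightarrow> real set \<Rightarrow> real set \<Rightarrow> real set
                    \<Rightarrow> (nat \<Rightarrow> real \<times> real) \<Rightarrow> bool" where
  "Vhb periodic J PD P0 P1 P2 eta \<longleftrightarrow> Vh0 periodic J P0 eta
     \<and> (\<forall>p\<in>P1. bval J eta p \<bullet> e1 = 0) \<and> (\<forall>p\<in>P2. bval J eta p \<bullet> e2 = 0)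
     \<and> (\<forall>p\<in>PD. bval J eta p = 0)"

definition Wh0 :: "bool \<Rightarrow> nat \<Rightarrow> real set \<Rightarrow> (nat \<Rightarrow> real) \<Rightarrow> bool" where
  "Wh0 periodic J P0 chi \<longleftrightarrow> inVh periodic J chi \<and> (\<forall>p\<in>P0. bval J chi p = 0)"

definition assmA :: "nat \<Rightarrow> real set \<Rightarrow> (nat \<Rightarrow> real \<times> real) \<Rightarrow> bool" where
  "assmA J P0 X \<longleftrightarrow>
     (\<forall>j\<in>{1..J}. \<forall>rho\<in>{node J (j - 1) .. node J j}. norm (dpl J X j rho) > 0)
   \<and> (\<forall>j\<in>{1..J}. \<forall>rho\<in>{node J (j - 1) .. node J j}.
         rho \<notin> P0 \<longrightarrow> pl J X j rho \<bullet> e1 > 0)"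

definition energy :: "nat \<Rightarrow> real set \<Rightarrow> real set \<Rightarrow> (real \<Rightarrow> real)
                       \<Rightarrow> (nat \<Rightarrow> real \<times> real) \<Rightarrow> real" where
  "energy J P1 P2 varrho X =
     2 * pi * l2ip J (\<lambda>j rho. pl J X j rho \<bullet> e1) (\<lambda>j rho. norm (dpl J X j rho))
   + 2 * pi * (\<Sum>p\<in>P1. varrho p * (bval J X p \<bullet> e1) * (bval J X p \<bullet> e2))
   + pi * (\<Sum>p\<in>P2. varrho p * (bval J X p \<bullet> e1)\<^sup>2)"

definition Bm :: "nat \<Rightarrow> real set \<Rightarrow> real set \<Rightarrow> (real \<Rightarrow> real)
                   \<Rightarrow> (nat \<Rightarrow> real \<times> real) \<Rightarrow> (nat \<Rightarrow> real \<times> real)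
                   \<Rightarrow> (nat \<Rightarrow> real \<times> real) \<Rightarrow> real" where
  "Bm J P1 P2 varrho Xm Xm1 eta =
     - (\<Sum>p\<in>P1. varrho p * (bval J Xm p \<bullet> e1) * (bval J eta p \<bullet> e2))
     - (\<Sum>p\<in>P2. ((posp (varrho p) *\<^sub>R bval J Xm1 p + negp (varrho p) *\<^sub>R bval J Xm p) \<bullet> e1)
                  * (bval J eta p \<bullet> e1))"

end

theory Submission
  imports Defs
begin



lemma ip_e1: "v \<bullet> e1 = fst v" by (cases v) (simp add: e1_def)
lemma ip_e2: "v \<bullet> e2 = snd v" by (cases v) (simp add: e2_def)

lemma pl_right: "J > 0 \<Longrightarrow> j \<ge> 1 \<Longrightarrow> pl J X j (node J j) = X j"
  by (simp add: pl_def node_def of_nat_diff field_simps)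
lemma pl_left: "pl J X j (node J (j-1)) = X (j-1)"
  by (simp add: pl_def)
lemma pl_left': "pl J X j (node J (j - Suc 0)) = X (j - Suc 0)"
  by (simp add: pl_def)
lemma pl_add: "pl J (\<lambda>i. X i + Y i) j rho = pl J X j rho + pl J Y j rho"
  by (simp add: pl_def algebra_simps)
lemma dpl_add: "dpl J (\<lambda>i. X i + Y i) j rho = dpl J X j rho + dpl J Y j rho"
  by (simp add: dpl_def algebra_simps)

lemma key:
  fixes u v :: "real \<times> real"
  assumes "norm u > 0" "w \<ge> 0"
  shows "d * norm v + (w *\<^sub>R v) \<bullet> (inverse (norm u) *\<^sub>R (v - u)) \<ge> (w + d) * norm v - w * norm u"
proof -
  have "v \<bullet> u \<le> norm v * norm u" by (rule norm_cauchy_schwarz)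
  hence "v \<bullet> (v - u) \<ge> norm v * norm v - norm v * norm u"
    by (simp add: inner_diff_right dot_square_norm power2_eq_square)
  then have "v \<bullet> (v - u) \<ge> norm u * (norm v - norm u)"
  proof -
    have "norm u * (norm v - norm u) = norm v * norm v - norm v * norm u - (norm v - norm u)^2"
      by (simp add: power2_eq_square algebra_simps)
    moreover have "(norm v - norm u)^2 \<ge> 0" by simp
    ultimately show ?thesis using \<open>v \<bullet> (v - u) \<ge> norm v * norm v - norm v * norm u\<close> by linarith
  qed
  hence "v \<bullet> (v - u) / norm u \<ge> norm v - norm u" using assms(1)
    by (simp add: pos_le_divide_eq mult.commute)
  hence "w * (v \<bullet> (v - u) / norm u) \<ge> w * (norm v - norm u)" using assms(2)
    by (rule mult_left_mono)
  thus ?thesis by (simp add: algebra_simps divide_inverse)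
qed

lemma cont: "continuous_on S (\<lambda>rho. (pl J X j rho \<bullet> e1) * norm (dpl J Y j rho))"
  unfolding pl_def dpl_def by (intro continuous_intros)
lemma cont2: "continuous_on S (\<lambda>rho. (pl J X j rho \<bullet> e1) *\<^sub>R dpl J Y j rho \<bullet> (inverse (norm (dpl J Z j rho)) *\<^sub>R dpl J W j rho))"
  unfolding pl_def dpl_def by (intro continuous_intros)

lemma fin:
  fixes c T1 A2 Bt S1a S1b S1c S2a S2b S2c dt M L1 L0 :: real
  assumes "T1 + A2 + Bt = - S1c - S2c" "T1 = dt*M" "S1a = S1b + S1c"
    "c*S2a \<le> c*(S2b + 2*S2c)" "2*c*(L1-L0) \<le> 2*c*(A2+Bt)" "2*c*dt*M \<ge> 0"
  shows "2*c*L1 + 2*c*S1a + c*S2a + 2*c*dt*M \<le> 2*c*L0 + 2*c*S1b + c*S2b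
       \<and> 2*c*L1 + 2*c*S1a + c*S2a \<le> 2*c*L0 + 2*c*S1b + c*S2b"
proof -
  have "c*(T1 + A2 + Bt) = c*(- S1c - S2c)" using assms(1) by simp
  hence h: "c*T1 + c*A2 + c*Bt = - c*S1c - c*S2c" by (simp add: algebra_simps)
  have h2: "c*T1 = c*dt*M" using assms(2) by simp
  have h3: "c*S1a = c*S1b + c*S1c" using assms(3) by (simp add: algebra_simps)
  have h4: "c*S2a \<le> c*S2b + 2*(c*S2c)" using assms(4) by (simp add: algebra_simps)
  have h5: "c*L1 - c*L0 \<le> c*A2 + c*Bt" using assms(5) by (simp add: algebra_simps)
  have h6: "c*dt*M \<ge> 0" using assms(6) by (simp add: mult_ac)
  have "2*c*L1 = 2*(c*L1)" "2*c*L0 = 2*(c*L0)" "2*c*S1a = 2*(c*S1a)" "2*c*S1b = 2*(c*S1b)" "2*c*dt*M = 2*(c*dt*M)" by simp_all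
  then show ?thesis using h h2 h3 h4 h5 h6 by linarith
qed

theorem mainTheorem10:
  fixes periodic :: bool and J :: nat
    and PD P0 P1 P2 :: "real set" and varrho :: "real \<Rightarrow> real"
    and f :: "real \<Rightarrow> real" and dt :: real
    and Xm dX :: "nat \<Rightarrow> real \<times> real" and kappa :: "nat \<Rightarrow> real"
  defines "Xm1 \<equiv> (\<lambda>i. Xm i + dX i)"
  assumes J3: "J \<ge> 3"
    and partition: "PD \<union> P0 \<union> P1 \<union> P2 = bdry periodic"
      "PD \<inter> P0 = {}" "PD \<inter> P1 = {}" "PD \<inter> P2 = {}"
      "P0 \<inter> P1 = {}" "P0 \<inter> P2 = {}" "P1 \<inter> P2 = {}"
    and varrho_bd: "\<forall>p\<in>bdry periodic. \<bar>varrho p\<bar> \<le> 1"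
    and f_mono: "mono f" and f0: "f 0 = 0"
    and Xm_in: "Vh0 periodic J P0 Xm" and A: "assmA J P0 Xm"
    and dt_pos: "dt > 0"
    and dX_in: "Vhb periodic J PD P0 P1 P2 dX"
    and kappa_in: "Wh0 periodic J P0 kappa"
    and eq1: "\<forall>chi. Wh0 periodic J P0 chi \<longrightarrow>
        mlip J (\<lambda>j rho. (pl J Xm j rho \<bullet> e1) *\<^sub>R ((1 / dt) *\<^sub>R (pl J Xm1 j rho - pl J Xm j rho)))
               (\<lambda>j rho. (pl J chi j rho * norm (dpl J Xm j rho)) *\<^sub>R nu J Xm j rho)
      = mlip J (\<lambda>j rho. (pl J Xm j rho \<bullet> e1) * pl J (\<lambda>i. f (kappa i)) j rho)
               (\<lambda>j rho. pl J chi j rho * norm (dpl J Xm j rho))"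
    and eq2: "\<forall>eta. Vhb periodic J PD P0 P1 P2 eta \<longrightarrow>
        mlip J (\<lambda>j rho. ((pl J Xm j rho \<bullet> e1) * pl J kappa j rho) *\<^sub>R nu J Xm j rho)
               (\<lambda>j rho. norm (dpl J Xm j rho) *\<^sub>R pl J eta j rho)
      + l2ip J (\<lambda>j rho. pl J eta j rho \<bullet> e1) (\<lambda>j rho. norm (dpl J Xm1 j rho))
      + l2ip J (\<lambda>j rho. (pl J Xm j rho \<bullet> e1) *\<^sub>R dpl J Xm1 j rho)
               (\<lambda>j rho. inverse (norm (dpl J Xm j rho)) *\<^sub>R dpl J eta j rho)
      = Bm J P1 P2 varrho Xm Xm1 eta"
  shows "energy J P1 P2 varrho Xm1
           + 2 * pi * dt * mlip J (\<lambda>j rho. (pl J Xm j rho \<bullet> e1) * f (pl J kappa j rho))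
                                  (\<lambda>j rho. pl J kappa j rho * norm (dpl J Xm j rho))
         \<le> energy J P1 P2 varrho Xm
      \<and> energy J P1 P2 varrho Xm1 \<le> energy J P1 P2 varrho Xm"
  proof -
  have JP: "J > 0" using J3 by simp
  have X1pl: "pl J Xm1 j rho = pl J Xm j rho + pl J dX j rho" for j rho
    unfolding Xm1_def by (rule pl_add)
  have X1dpl: "dpl J Xm1 j rho = dpl J Xm j rho + dpl J dX j rho" for j rho
    unfolding Xm1_def by (rule dpl_add)
  have X1b: "bval J Xm1 p = bval J Xm p + bval J dX p" for p
    by (simp add: bval_def Xm1_def)
  define M where "M = mlip J (\<lambda>j rho. (pl J Xm j rho \<bullet> e1) * f (pl J kappa j rho))
                                  (\<lambda>j rho. pl J kappa j rho * norm (dpl J Xm j rho))"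
  define T1 where "T1 = mlip J (\<lambda>j rho. ((pl J Xm j rho \<bullet> e1) * pl J kappa j rho) *\<^sub>R nu J Xm j rho)
               (\<lambda>j rho. norm (dpl J Xm j rho) *\<^sub>R pl J dX j rho)"
  define A2 where "A2 = l2ip J (\<lambda>j rho. pl J dX j rho \<bullet> e1) (\<lambda>j rho. norm (dpl J Xm1 j rho))"
  define Bt where "Bt = l2ip J (\<lambda>j rho. (pl J Xm j rho \<bullet> e1) *\<^sub>R dpl J Xm1 j rho)
               (\<lambda>j rho. inverse (norm (dpl J Xm j rho)) *\<^sub>R dpl J dX j rho)"
  define L1 where "L1 = l2ip J (\<lambda>j rho. pl J Xm1 j rho \<bullet> e1) (\<lambda>j rho. norm (dpl J Xm1 j rho))"
  define L0 where "L0 = l2ip J (\<lambda>j rho. pl J Xm j rho \<bullet> e1) (\<lambda>j rho. norm (dpl J Xm j rho))"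
  have e2d: "T1 + A2 + Bt = Bm J P1 P2 varrho Xm Xm1 dX"
    using eq2 dX_in unfolding T1_def A2_def Bt_def by blast
  have e1k: "mlip J (\<lambda>j rho. (pl J Xm j rho \<bullet> e1) *\<^sub>R ((1 / dt) *\<^sub>R (pl J Xm1 j rho - pl J Xm j rho)))
               (\<lambda>j rho. (pl J kappa j rho * norm (dpl J Xm j rho)) *\<^sub>R nu J Xm j rho)
      = mlip J (\<lambda>j rho. (pl J Xm j rho \<bullet> e1) * pl J (\<lambda>i. f (kappa i)) j rho)
               (\<lambda>j rho. pl J kappa j rho * norm (dpl J Xm j rho))"
    using eq1 kappa_in by blast
  have pt: "((a*k) *\<^sub>R n) \<bullet> (m *\<^sub>R p) = dt * ((a *\<^sub>R ((1/dt) *\<^sub>R p)) \<bullet> ((k*m) *\<^sub>R n))"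
    for a k m :: real and n p :: "real \<times> real"
    using dt_pos by (simp add: inner_commute[of n p] field_simps)
  have T1eq: "T1 = dt * mlip J (\<lambda>j rho. (pl J Xm j rho \<bullet> e1) *\<^sub>R ((1 / dt) *\<^sub>R (pl J Xm1 j rho - pl J Xm j rho)))
               (\<lambda>j rho. (pl J kappa j rho * norm (dpl J Xm j rho)) *\<^sub>R nu J Xm j rho)"
    unfolding T1_def mlip_def X1pl using dt_pos by (simp add: pt sum_distrib_left algebra_simps inner_commute)
  have Meq: "mlip J (\<lambda>j rho. (pl J Xm j rho \<bullet> e1) * pl J (\<lambda>i. f (kappa i)) j rho)
               (\<lambda>j rho. pl J kappa j rho * norm (dpl J Xm j rho)) = M"
    unfolding M_def mlip_def
    by (intro arg_cong[where f="\<lambda>x. 1 / real J / 2 * x"] sum.cong refl)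
       (simp add: pl_right pl_left pl_left' JP)
  have T1M: "T1 = dt * M" using T1eq e1k Meq by simp
  have nodeJ: "node J i = 1 \<longleftrightarrow> i = J" for i using JP by (auto simp add: node_def)
  have node0: "node J i = 0 \<longleftrightarrow> i = 0" for i using JP by (auto simp add: node_def)
  have P0b: "P0 \<subseteq> {0,1}" using partition(1) by (auto simp: bdry_def split: if_splits)
  have nodes: "Xm i \<bullet> e1 \<ge> 0" if "i \<le> J" for i
  proof (cases "i = 0")
    case True
    have "1 \<in> {1..J}" using JP by simp
    moreover have "node J 0 \<in> {node J (1 - 1) .. node J 1}" by (simp add: node_def)
    ultimately have h: "node J 0 \<notin> P0 \<longrightarrow> pl J Xm 1 (node J 0) \<bullet> e1 > 0" using A unfolding assmA_def by blast
    have "pl J Xm 1 (node J 0) = Xm 0" using pl_left[of J Xm 1] by simp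
    moreover have "node J 0 \<in> P0 \<Longrightarrow> Xm 0 \<bullet> e1 = 0" using Xm_in unfolding Vh0_def
      by (auto simp: bval_def node_def)
    ultimately show ?thesis using h True by force
  next
    case False
    hence "i \<in> {1..J}" using that by simp
    moreover have "node J i \<in> {node J (i - 1) .. node J i}" using JP by (simp add: node_def divide_right_mono)
    ultimately have h: "node J i \<notin> P0 \<longrightarrow> pl J Xm i (node J i) \<bullet> e1 > 0" using A unfolding assmA_def by blast
    have "pl J Xm i (node J i) = Xm i" using pl_right[of J i Xm] JP False by simp
    moreover have "node J i \<in> P0 \<Longrightarrow> Xm i \<bullet> e1 = 0"
    proof -
      assume a: "node J i \<in> P0"
      hence "node J i = 1" using P0b node0 False by auto
      hence "i = J" using nodeJ by simp
      thus ?thesis using a Xm_in \<open>node J i = 1\<close> unfolding Vh0_def by (auto simp: bval_def)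
    qed
    ultimately show ?thesis using h by force
  qed
  have wpos: "pl J Xm j rho \<bullet> e1 \<ge> 0" if "j \<in> {1..J}" "rho \<in> {node J (j - 1) .. node J j}" for j rho
  proof -
    define t where "t = (rho - node J (j - 1)) * real J"
    have t0: "t \<ge> 0" using that JP by (simp add: t_def)
    have "node J j - node J (j - 1) = 1 / real J" using that JP by (simp add: node_def of_nat_diff field_simps)
    hence "rho - node J (j - 1) \<le> 1 / real J" using that by simp
    hence "(rho - node J (j - 1)) * real J \<le> (1 / real J) * real J" using JP
      by (intro mult_right_mono) auto
    hence t1: "t \<le> 1" using JP unfolding t_def by simp
    have a: "Xm (j-1) \<bullet> e1 \<ge> 0" "Xm j \<bullet> e1 \<ge> 0" using nodes that by auto
    have "pl J Xm j rho \<bullet> e1 = (1 - t) * (Xm (j-1) \<bullet> e1) + t * (Xm j \<bullet> e1)"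
      unfolding pl_def t_def by (simp add: inner_add_left inner_diff_left algebra_simps)
    also have "\<dots> \<ge> 0" using a t0 t1 by (simp add: add_nonneg_nonneg mult_nonneg_nonneg)
    finally show ?thesis .
  qed
  have L1L0: "L1 - L0 \<le> A2 + Bt"
  proof -
    let ?g = "\<lambda>j rho. pl J dX j rho \<bullet> e1 * norm (dpl J Xm1 j rho)"
    let ?g2 = "\<lambda>j rho. (pl J Xm j rho \<bullet> e1) *\<^sub>R dpl J Xm1 j rho \<bullet> (inverse (norm (dpl J Xm j rho)) *\<^sub>R dpl J dX j rho)"
    let ?h1 = "\<lambda>j rho. pl J Xm1 j rho \<bullet> e1 * norm (dpl J Xm1 j rho)"
    let ?h0 = "\<lambda>j rho. pl J Xm j rho \<bullet> e1 * norm (dpl J Xm j rho)"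
    have "L1 - L0 = (\<Sum>j = 1..J. integral {node J (j - 1) .. node J j} (\<lambda>rho. ?h1 j rho - ?h0 j rho))"
      unfolding L1_def L0_def l2ip_def inner_real_def sum_subtractf[symmetric]
      by (intro sum.cong refl integral_diff[symmetric] integrable_continuous_interval cont)
    also have "\<dots> \<le> (\<Sum>j = 1..J. integral {node J (j - 1) .. node J j} (\<lambda>rho. ?g j rho + ?g2 j rho))"
    proof (intro sum_mono integral_le integrable_continuous_interval continuous_on_diff continuous_on_add cont cont2)
      fix j rho assume j: "j \<in> {1..J}" and r: "rho \<in> {node J (j - 1) .. node J j}"
      have np: "norm (dpl J Xm j rho) > 0" using A j r unfolding assmA_def by blast
      have "?h1 j rho - ?h0 j rho = (pl J Xm j rho \<bullet> e1 + pl J dX j rho \<bullet> e1) * norm (dpl J Xm1 j rho) - pl J Xm j rho \<bullet> e1 * norm (dpl J Xm j rho)"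
        by (simp add: X1pl inner_add_left)
      also have "\<dots> \<le> ?g j rho + ?g2 j rho"
        using key[OF np wpos[OF j r], where v="dpl J Xm1 j rho" and d="pl J dX j rho \<bullet> e1"]
        by (simp add: X1dpl)
      finally show "?h1 j rho - ?h0 j rho \<le> ?g j rho + ?g2 j rho" .
    qed
    also have "\<dots> = A2 + Bt"
      unfolding A2_def Bt_def l2ip_def inner_real_def sum.distrib[symmetric]
      by (intro sum.cong refl integral_add integrable_continuous_interval cont cont2)
    finally show ?thesis .
  qed
  have bd1: "(\<Sum>p\<in>P1. varrho p * (bval J Xm1 p \<bullet> e1) * (bval J Xm1 p \<bullet> e2))
      = (\<Sum>p\<in>P1. varrho p * (bval J Xm p \<bullet> e1) * (bval J Xm p \<bullet> e2))
      + (\<Sum>p\<in>P1. varrho p * (bval J Xm p \<bullet> e1) * (bval J dX p \<bullet> e2))"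
    unfolding sum.distrib[symmetric]
  proof (rule sum.cong[OF refl])
    fix p assume "p \<in> P1"
    hence "bval J dX p \<bullet> e1 = 0" using dX_in unfolding Vhb_def by blast
    thus "varrho p * (bval J Xm1 p \<bullet> e1) * (bval J Xm1 p \<bullet> e2) =
      varrho p * (bval J Xm p \<bullet> e1) * (bval J Xm p \<bullet> e2) + varrho p * (bval J Xm p \<bullet> e1) * (bval J dX p \<bullet> e2)"
      by (simp add: X1b inner_add_left algebra_simps)
  qed
  have bd2: "(\<Sum>p\<in>P2. varrho p * (bval J Xm1 p \<bullet> e1)\<^sup>2)
      \<le> (\<Sum>p\<in>P2. varrho p * (bval J Xm p \<bullet> e1)\<^sup>2)
      + 2 * (\<Sum>p\<in>P2. ((posp (varrho p) *\<^sub>R bval J Xm1 p + negp (varrho p) *\<^sub>R bval J Xm p) \<bullet> e1)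
                  * (bval J dX p \<bullet> e1))"
    unfolding sum_distrib_left sum.distrib[symmetric]
  proof (rule sum_mono)
    fix p
    define a where "a = bval J Xm p \<bullet> e1"
    define d where "d = bval J dX p \<bullet> e1"
    define P where "P = posp (varrho p)"
    define N where "N = negp (varrho p)"
    have r: "varrho p = P + N" "P \<ge> 0" "N \<le> 0" unfolding P_def N_def posp_def negp_def by auto
    have "P * d^2 \<ge> 0" "N * d^2 \<le> 0" using r by (auto simp: mult_nonpos_nonneg)
    moreover have "(varrho p * a\<^sup>2 + 2 * ((P * (a + d) + N * a) * d)) - varrho p * (a + d)\<^sup>2 = P * d^2 - N * d^2"
      unfolding r(1) by (simp add: power2_eq_square algebra_simps)
    ultimately have "varrho p * (a + d)\<^sup>2 \<le> varrho p * a\<^sup>2 + 2 * ((P * (a + d) + N * a) * d)" by linarith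
    thus "varrho p * (bval J Xm1 p \<bullet> e1)\<^sup>2 \<le> varrho p * (bval J Xm p \<bullet> e1)\<^sup>2 +
         2 * ((posp (varrho p) *\<^sub>R bval J Xm1 p + negp (varrho p) *\<^sub>R bval J Xm p) \<bullet> e1 * (bval J dX p \<bullet> e1))"
      unfolding a_def d_def P_def N_def by (simp add: X1b inner_add_left)
  qed
  have Mnn: "M \<ge> 0"
  proof -
    have fk: "f x * x \<ge> 0" for x
    proof (cases "x \<ge> 0")
      case True thus ?thesis using f_mono f0 by (metis mono_def mult_nonneg_nonneg)
    next
      case False thus ?thesis using f_mono f0 by (metis le_cases mono_def mult_nonpos_nonpos)
    qed
    have "0 \<le> (\<Sum>j = 1..J. (pl J Xm j (node J j) \<bullet> e1 * f (pl J kappa j (node J j))) * (pl J kappa j (node J j) * norm (dpl J Xm j (node J j)))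
                 + (pl J Xm j (node J (j - 1)) \<bullet> e1 * f (pl J kappa j (node J (j - 1)))) * (pl J kappa j (node J (j - 1)) * norm (dpl J Xm j (node J (j - 1)))))"
    proof (intro sum_nonneg add_nonneg_nonneg)
      fix j assume j: "j \<in> {1..J}"
      have n1: "node J (j - 1) \<le> node J j" using JP by (simp add: node_def divide_right_mono)
      have w1: "pl J Xm j (node J j) \<bullet> e1 \<ge> 0" "pl J Xm j (node J (j - 1)) \<bullet> e1 \<ge> 0"
        using wpos[OF j] n1 by auto
      show "0 \<le> (pl J Xm j (node J j) \<bullet> e1 * f (pl J kappa j (node J j))) * (pl J kappa j (node J j) * norm (dpl J Xm j (node J j)))"
        using w1(1) fk[of "pl J kappa j (node J j)"]
        by (metis (no_types, lifting) mult.assoc mult.left_commute mult_nonneg_nonneg norm_ge_zero)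
      show "0 \<le> (pl J Xm j (node J (j - 1)) \<bullet> e1 * f (pl J kappa j (node J (j - 1)))) * (pl J kappa j (node J (j - 1)) * norm (dpl J Xm j (node J (j - 1))))"
        using w1(2) fk[of "pl J kappa j (node J (j - 1))"]
        by (metis (no_types, lifting) mult.assoc mult.left_commute mult_nonneg_nonneg norm_ge_zero)
    qed
    thus ?thesis unfolding M_def mlip_def by simp
  qed
  have bm: "Bm J P1 P2 varrho Xm Xm1 dX =
     - (\<Sum>p\<in>P1. varrho p * (bval J Xm p \<bullet> e1) * (bval J dX p \<bullet> e2))
     - (\<Sum>p\<in>P2. ((posp (varrho p) *\<^sub>R bval J Xm1 p + negp (varrho p) *\<^sub>R bval J Xm p) \<bullet> e1)
                  * (bval J dX p \<bullet> e1))" unfolding Bm_def by simp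
  have pipos: "pi > 0" by (rule pi_gt_zero)
  have L1L0': "2 * pi * (L1 - L0) \<le> 2 * pi * (A2 + Bt)" using L1L0 pipos by simp
  have bd2': "pi * (\<Sum>p\<in>P2. varrho p * (bval J Xm1 p \<bullet> e1)\<^sup>2)
      \<le> pi * ((\<Sum>p\<in>P2. varrho p * (bval J Xm p \<bullet> e1)\<^sup>2)
      + 2 * (\<Sum>p\<in>P2. ((posp (varrho p) *\<^sub>R bval J Xm1 p + negp (varrho p) *\<^sub>R bval J Xm p) \<bullet> e1)
                  * (bval J dX p \<bullet> e1)))" using mult_left_mono[OF bd2] pipos by simp
  have M0: "2 * pi * dt * M \<ge> 0" using Mnn pipos dt_pos by simp
  show ?thesis
    unfolding energy_def L1_def[symmetric] L0_def[symmetric] M_def[symmetric]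
    by (rule fin[OF e2d[unfolded bm] T1M bd1 bd2' L1L0' M0])
qed

end
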